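(* The Chabauty space $\mathcal{C}(\mathbf{Z}^2)$ is homeomorphic to $\overline{\mathbf{N}}^2$.
   Context: For a discrete group $G$, $\mathcal{C}(G)$ is the set of subgroups of $G$ with the Chabauty topology (the topology induced by the product topology on $\{0,1\}^G$). $\overline{\mathbf{N}}=\mathbf{N}\cup\{\infty\}$ is the one-point compactification of $\mathbf{N}$. *)

theory Defs
  imports "HOL-Analysis.Analysis"
begin

definition add_subgroup :: "'a::ab_group_add set \<Rightarrow> bool" where
  "add_subgroup H \<longleftrightarrow> 0 \<in> H \<and> (\<forall>x\<in>H. \<forall>y\<in>H. x + y \<in> H) \<and> (\<forall>x\<in>H. - x \<in> H)"

text \<open>Chabauty space of a discrete group G: the set of subgroups, identified with their
  indicator functions G \<Rightarrow> bool, with the topology induced by the product topology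
  on {0,1}^G (each factor discrete).\<close>
definition chabauty :: "('a::ab_group_add \<Rightarrow> bool) topology" where
  "chabauty = subtopology (product_topology (\<lambda>_. discrete_topology (UNIV :: bool set)) UNIV)
                          {f. add_subgroup {x. f x}}"

end

theory Submission
  imports Defs
begin


lemma Hausdorff_euclidean_t2: "Hausdorff_space (euclidean :: 'a::t2_space topology)"
  unfolding Hausdorff_space_def disjnt_def using hausdorff by auto

lemma compactin_isolated_finite:
  assumes "compactin T K" "\<And>x. x \<in> K \<Longrightarrow> openin T {x}"
  shows "finite K"
proof -
  have "\<exists>F. finite F \<and> F \<subseteq> (\<lambda>x. {x}) ` K \<and> K \<subseteq> \<Union>F"
  proof -
    have "\<forall>\<U>. Ball \<U> (openin T) \<and> K \<subseteq> \<Union>\<U> \<longrightarrow> (\<exists>\<F>. finite \<F> \<and> \<F> \<subseteq> \<U> \<and> K \<subseteq> \<Union>\<F>)"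
      using assms(1) unfolding compactin_def by blast
    moreover have "Ball ((\<lambda>x. {x}) ` K) (openin T)" using assms(2) by auto
    moreover have "K \<subseteq> \<Union>((\<lambda>x. {x}) ` K)" by auto
    ultimately show ?thesis by blast
  qed
  then obtain F where "finite F" "F \<subseteq> (\<lambda>x. {x}) ` K" "K \<subseteq> \<Union>F" by blast
  moreover have "finite (\<Union>F)" using \<open>finite F\<close> \<open>F \<subseteq> (\<lambda>x. {x}) ` K\<close> by (intro finite_Union) auto
  ultimately show ?thesis using finite_subset by blast
qed

lemma enat_char:
  fixes T :: "'a topology"
  assumes cT: "compact_space T" and hT: "Hausdorff_space T" and q: "q \<in> topspace T"
    and cnt: "countable (topspace T)" and inf: "infinite (topspace T)"
    and iso: "\<And>x. x \<in> topspace T \<Longrightarrow> x \<noteq> q \<Longrightarrow> openin T {x}"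
  shows "T homeomorphic_space (euclidean :: enat topology)"
proof -
  define D where "D = topspace T - {q}"
  have "countable D" "infinite D" using cnt inf unfolding D_def by auto
  then have bij: "bij_betw (from_nat_into D) UNIV D" by (rule bij_betw_from_nat_into)
  define e where "e = from_nat_into D"
  define psi where "psi x = (case x of enat n \<Rightarrow> e n | \<infinity> \<Rightarrow> q)" for x
  have einj: "inj e" and eD: "\<And>n. e n \<in> D" and esurj: "e ` UNIV = D"
    using bij unfolding e_def bij_betw_def by auto
  have cont: "continuous_map euclidean T psi"
    unfolding continuous_map_def
  proof (intro conjI allI impI)
    show "psi \<in> topspace euclidean \<rightarrow> topspace T"
      using eD q by (auto simp: psi_def D_def split: enat.splits)
    fix U assume U: "openin T U"
    show "openin euclidean {x \<in> topspace euclidean. psi x \<in> U}"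
    proof (cases "q \<in> U")
      case False
      have "{x \<in> topspace euclidean. psi x \<in> U} = (\<Union>n\<in>{n. e n \<in> U}. {enat n})"
        using False by (auto simp: psi_def split: enat.splits)
      then show ?thesis by (auto intro: open_enat)
    next
      case True
      have K: "compactin T (topspace T - U)"
        using U cT by (simp add: closedin_compact_space closedin_diff)
      have "finite (topspace T - U)"
        by (rule compactin_isolated_finite[OF K]) (use iso True in auto)
      then have fin: "finite {n. e n \<in> topspace T - U}"
        using einj finite_vimageI[of "topspace T - U" e] by (simp add: vimage_def)
      have "{x \<in> topspace euclidean. psi x \<in> U} = - (enat ` {n. e n \<in> topspace T - U})"
        using True eD by (auto simp: psi_def D_def split: enat.splits)
      moreover have "closed (enat ` {n. e n \<in> topspace T - U})"
        using fin by (intro finite_imp_closed) auto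
      ultimately show ?thesis by (simp add: open_Compl)
    qed
  qed
  have psi1: "psi \<infinity> = q" and psi2: "\<And>n. psi (enat n) = e n" by (simp_all add: psi_def)
  have img: "psi ` topspace euclidean = topspace T"
  proof (intro equalityI subsetI)
    fix y assume "y \<in> psi ` topspace euclidean"
    then obtain x where "y = psi x" by auto
    then show "y \<in> topspace T" using q eD D_def by (cases x) (auto simp: psi1 psi2)
  next
    fix y assume y: "y \<in> topspace T"
    show "y \<in> psi ` topspace euclidean"
    proof (cases "y = q")
      case True then show ?thesis using psi1 by (metis UNIV_I image_eqI topspace_euclidean)
    next
      case False then have "y \<in> e ` UNIV" using esurj y D_def by auto
      then obtain n where "y = e n" by auto
      then show ?thesis using psi2 by (metis UNIV_I image_eqI topspace_euclidean)
    qed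
  qed
  have inj: "inj_on psi (topspace euclidean)"
    unfolding inj_on_def
  proof (intro ballI impI)
    fix x y assume xy: "psi x = psi y"
    have qn: "\<And>n. e n \<noteq> q" using eD D_def by auto
    show "x = y"
    proof (cases x; cases y)
      fix n m assume "x = enat n" "y = enat m"
      then show "x = y" using xy einj by (simp add: psi2 inj_eq)
    next
      fix n assume "x = enat n" "y = \<infinity>"
      then show "x = y" using xy qn by (simp add: psi1 psi2)
    next
      fix n assume "x = \<infinity>" "y = enat n"
      then show "x = y" using xy qn by (simp add: psi1 psi2) (metis)
    qed simp
  qed
  have "compact_space (euclidean :: enat topology)"
    using compact_UNIV by (simp add: compact_space_def)
  then have "homeomorphic_map euclidean T psi"
    using continuous_imp_homeomorphic_map[OF cont _ hT img inj] by simp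
  then show ?thesis using homeomorphic_space homeomorphic_space_sym by blast
qed



lemma assemble:
  fixes X :: "'a topology" and Y :: "'b topology" and Xs :: "nat \<Rightarrow> 'a set" and Ys :: "nat \<Rightarrow> 'b set"
  assumes cX: "compact_space X" and hY: "Hausdorff_space Y"
    and p: "p \<in> topspace X" and q: "q \<in> topspace Y"
    and Xo: "\<And>n. openin X (Xs n)" and Xc: "\<And>n. closedin X (Xs n)"
    and Xd: "\<And>m n. m \<noteq> n \<Longrightarrow> Xs m \<inter> Xs n = {}"
    and XU: "(\<Union>n. Xs n) = topspace X - {p}"
    and Yd: "\<And>m n. m \<noteq> n \<Longrightarrow> Ys m \<inter> Ys n = {}"
    and YU: "(\<Union>n. Ys n) = topspace Y - {q}"
    and cof: "\<And>V. openin Y V \<Longrightarrow> q \<in> V \<Longrightarrow> \<exists>N. \<forall>n\<ge>N. Ys n \<subseteq> V"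
    and hom: "\<And>n. subtopology X (Xs n) homeomorphic_space subtopology Y (Ys n)"
  shows "X homeomorphic_space Y"
proof -
  obtain h where h: "\<And>n. homeomorphic_map (subtopology X (Xs n)) (subtopology Y (Ys n)) (h n)"
    using hom unfolding homeomorphic_space by metis
  have Xsub: "Xs n \<subseteq> topspace X" for n using Xo openin_subset by blast
  have Ysub: "Ys n \<subseteq> topspace Y" for n using YU by blast
  have hcont: "continuous_map (subtopology X (Xs n)) (subtopology Y (Ys n)) (h n)" for n
    using h homeomorphic_imp_continuous_map by blast
  have himg: "h n ` Xs n = Ys n" for n
    using homeomorphic_imp_surjective_map[OF h[of n]] Xsub[of n] Ysub[of n] by (simp add: Int_absorb1)
  have hinj: "inj_on (h n) (Xs n)" for n
    using h[of n] Xsub homeomorphic_imp_injective_map by (metis inf.absorb2 topspace_subtopology)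
  define idx where "idx x = (THE n. x \<in> Xs n)" for x
  have idx: "x \<in> Xs n \<Longrightarrow> idx x = n" for x n
    unfolding idx_def using Xd by blast
  have pX: "p \<notin> Xs n" for n using XU by blast
  define H where "H x = (if x = p then q else h (idx x) x)" for x
  have Hn: "x \<in> Xs n \<Longrightarrow> H x = h n x" for x n
    using idx pX H_def by metis
  have Hp: "H p = q" by (simp add: H_def)
  have HYs: "x \<in> Xs n \<Longrightarrow> H x \<in> Ys n" for x n using Hn himg by blast
  have qY: "q \<notin> Ys n" for n using YU by blast
  have cont: "continuous_map X Y H"
    unfolding continuous_map_def
  proof (intro conjI allI impI)
    show "H \<in> topspace X \<rightarrow> topspace Y"
    proof
      fix x assume "x \<in> topspace X"
      then have "x = p \<or> (\<exists>n. x \<in> Xs n)" using XU by blast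
      then show "H x \<in> topspace Y" using Hp q HYs Ysub by blast
    qed
    fix V assume V: "openin Y V"
    show "openin X {x \<in> topspace X. H x \<in> V}"
    proof (subst openin_subopen, intro ballI)
      fix x assume x: "x \<in> {x \<in> topspace X. H x \<in> V}"
      show "\<exists>T. openin X T \<and> x \<in> T \<and> T \<subseteq> {x \<in> topspace X. H x \<in> V}"
      proof (cases "x = p")
        case True
        then obtain N where N: "\<forall>n\<ge>N. Ys n \<subseteq> V" using cof V x Hp by auto
        define T where "T = topspace X - (\<Union>n<N. Xs n)"
        have fN: "finite (Xs ` {..<N})" by simp
        have "closedin X (\<Union>n<N. Xs n)" using Xc fN by (intro closedin_Union) auto
        then have "openin X T" unfolding T_def by (intro openin_diff) auto
        moreover have "x \<in> T" using True p pX T_def by auto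
        moreover have "T \<subseteq> {x \<in> topspace X. H x \<in> V}"
        proof
          fix y assume y: "y \<in> T"
          show "y \<in> {x \<in> topspace X. H x \<in> V}"
          proof (cases "y = p")
            case True then show ?thesis using x \<open>x = p\<close> by auto
          next
            case False
            then obtain n where n: "y \<in> Xs n" using y XU T_def by blast
            then have "n \<ge> N" using y T_def by (meson UN_I Diff_iff lessThan_iff not_le)
            then show ?thesis using N n HYs y T_def by blast
          qed
        qed
        ultimately show ?thesis by blast
      next
        case False
        then obtain n where n: "x \<in> Xs n" using x XU by blast
        have "openin (subtopology X (Xs n)) {y \<in> topspace (subtopology X (Xs n)). h n y \<in> V \<inter> Ys n}"
          using openin_continuous_map_preimage[OF hcont[of n] openin_subtopology_Int[OF V]] .
        moreover have "{y \<in> topspace (subtopology X (Xs n)). h n y \<in> V \<inter> Ys n} = {y \<in> Xs n. h n y \<in> V}"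
          using himg[of n] Xsub[of n] by (auto simp: Int_absorb1)
        ultimately have "openin (subtopology X (Xs n)) {y \<in> Xs n. h n y \<in> V}" by simp
        then have o: "openin X {y \<in> Xs n. h n y \<in> V}"
          using Xo openin_trans_full by blast
        have "{y \<in> Xs n. h n y \<in> V} \<subseteq> {x \<in> topspace X. H x \<in> V}"
          using Hn Xsub by auto
        then show ?thesis using o n x Hn by auto
      qed
    qed
  qed
  have img: "H ` topspace X = topspace Y"
  proof (intro equalityI subsetI)
    fix y assume "y \<in> H ` topspace X"
    then show "y \<in> topspace Y" using continuous_map_image_subset_topspace[OF cont] by blast
  next
    fix y assume y: "y \<in> topspace Y"
    show "y \<in> H ` topspace X"
    proof (cases "y = q")
      case True then show ?thesis using Hp p by auto
    next
      case False
      then obtain n where "y \<in> Ys n" using y YU by blast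
      then obtain x where "x \<in> Xs n" "y = h n x" using himg by blast
      then have "y = H x" using Hn by simp
      then show ?thesis using \<open>x \<in> Xs n\<close> Xsub by blast
    qed
  qed
  have inj: "inj_on H (topspace X)"
  proof (rule inj_onI)
    fix x y assume x: "x \<in> topspace X" and y: "y \<in> topspace X" and e: "H x = H y"
    have cx: "x = p \<or> (\<exists>n. x \<in> Xs n)" using x XU by blast
    have cy: "y = p \<or> (\<exists>n. y \<in> Xs n)" using y XU by blast
    show "x = y"
    proof (cases "x = p")
      case True
      show ?thesis
      proof (rule ccontr)
        assume "x \<noteq> y"
        then obtain m where "y \<in> Xs m" using cy True by blast
        then have "H y \<in> Ys m" using HYs by blast
        then show False using e True Hp qY by simp
      qed
    next
      case False
      then obtain n where n: "x \<in> Xs n" using cx by blast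
      show ?thesis
      proof (cases "y = p")
        case True
        have "H x \<in> Ys n" using HYs n by blast
        then show ?thesis using e True Hp qY by simp
      next
        case False
        then obtain m where m: "y \<in> Xs m" using cy by blast
        have hx: "H x \<in> Ys n" and hy: "H y \<in> Ys m" using n m HYs by auto
        have "m = n"
        proof (rule ccontr)
          assume "m \<noteq> n" then have "Ys m \<inter> Ys n = {}" by (rule Yd)
          then show False using hx hy e by auto
        qed
        then have "h n x = h n y" using e Hn n m by simp
        then show ?thesis using hinj[of n] n m \<open>m = n\<close> unfolding inj_on_def by blast
      qed
    qed
  qed
  have "homeomorphic_map X Y H"
    by (rule continuous_imp_homeomorphic_map[OF cont cX hY img inj])
  then show ?thesis using homeomorphic_space by blast
qed



lemma compact_enat_closed: "closed (S :: enat set) \<Longrightarrow> compact S"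
  using compact_eq_closed by blast

lemma piece_char:
  fixes S :: "(enat \<times> enat) set"
  assumes "compact S" "q \<in> S" "infinite S"
    and fin: "\<And>x. x \<in> S \<Longrightarrow> x \<noteq> q \<Longrightarrow> \<exists>a b. x = (enat a, enat b)"
  shows "subtopology euclidean S homeomorphic_space (euclidean :: enat topology)"
proof (rule enat_char[where q = q])
  show "compact_space (subtopology euclidean S)"
    using assms(1) by (simp add: compact_space_subtopology)
  show "Hausdorff_space (subtopology euclidean S)"
    by (rule Hausdorff_space_subtopology[OF Hausdorff_euclidean_t2])
  show "q \<in> topspace (subtopology euclidean S)" using assms(2) by simp
  show "countable (topspace (subtopology euclidean S))" by simp
  show "infinite (topspace (subtopology euclidean S))" using assms(3) by simp
  fix x assume x: "x \<in> topspace (subtopology euclidean S)" "x \<noteq> q"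
  have "\<exists>a b. x = (enat a, enat b)" using fin[of x] x by simp
  then obtain a b where ab: "x = (enat a, enat b)" by blast
  have "open ({enat a} \<times> {enat b})" by (intro open_Times open_enat)
  then have "openin (subtopology euclidean S) (S \<inter> ({enat a} \<times> {enat b}))"
    by (intro openin_subtopology_Int2) simp
  moreover have "S \<inter> ({enat a} \<times> {enat b}) = {x}" using x ab by auto
  ultimately show "openin (subtopology euclidean S) {x}" by simp
qed

definition Ypc :: "nat \<Rightarrow> (enat \<times> enat) set" where
  "Ypc n = (if even n then {enat (n div 2)} \<times> {enat (n div 2)..} else {enat (n div 2)<..} \<times> {enat (n div 2)})"

lemma Ypc_hom: "subtopology euclidean (Ypc n) homeomorphic_space (euclidean :: enat topology)"
proof (cases "even n")
  case True
  define k where "k = n div 2"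
  have S: "Ypc n = {enat k} \<times> {enat k..}" using True by (simp add: Ypc_def k_def)
  show ?thesis unfolding S
  proof (rule piece_char[where q = "(enat k, \<infinity>)"])
    show "compact ({enat k} \<times> {enat k..})"
      by (intro compact_Times compact_enat_closed) auto
    show "(enat k, \<infinity>) \<in> {enat k} \<times> {enat k..}" by simp
    have "range (\<lambda>j. (enat k, enat (k + j))) \<subseteq> {enat k} \<times> {enat k..}" by auto
    moreover have "inj (\<lambda>j. (enat k, enat (k + j)))" by (auto intro: injI)
    ultimately show "infinite ({enat k} \<times> {enat k..})"
      using infinite_UNIV_nat finite_subset range_inj_infinite by blast
    fix x assume "x \<in> {enat k} \<times> {enat k..}" "x \<noteq> (enat k, \<infinity>)"
    then show "\<exists>a b. x = (enat a, enat b)" by (cases x; cases "snd x") auto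
  qed
next
  case False
  define k where "k = n div 2"
  have S: "Ypc n = {enat k<..} \<times> {enat k}" using False by (simp add: Ypc_def k_def)
  show ?thesis unfolding S
  proof (rule piece_char[where q = "(\<infinity>, enat k)"])
    show "compact ({enat k<..} \<times> {enat k})"
    proof (intro compact_Times compact_enat_closed)
      have "{enat k<..} = {enat (Suc k)..}" by (auto simp: Suc_ile_eq)
      then show "closed {enat k<..}" by simp
    qed auto
    show "(\<infinity>, enat k) \<in> {enat k<..} \<times> {enat k}" by simp
    have "range (\<lambda>j. (enat (Suc k + j), enat k)) \<subseteq> {enat k<..} \<times> {enat k}" by auto
    moreover have "inj (\<lambda>j. (enat (Suc k + j), enat k))" by (auto intro: injI)
    ultimately show "infinite ({enat k<..} \<times> {enat k})"
      using infinite_UNIV_nat finite_subset range_inj_infinite by blast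
    fix x assume "x \<in> {enat k<..} \<times> {enat k}" "x \<noteq> (\<infinity>, enat k)"
    then show "\<exists>a b. x = (enat a, enat b)" by (cases x; cases "fst x") auto
  qed
qed

lemma Ypc_disj: "m \<noteq> n \<Longrightarrow> Ypc m \<inter> Ypc n = {}"
  unfolding Ypc_def
  apply (auto split: if_splits)
  apply presburger+
  done

lemma Ypc_Un: "(\<Union>n. Ypc n) = UNIV - {(\<infinity>, \<infinity>)}"
proof (intro equalityI subsetI)
  fix x assume "x \<in> (\<Union>n. Ypc n)"
  then show "x \<in> UNIV - {(\<infinity>, \<infinity>)}" by (auto simp: Ypc_def split: if_splits)
next
  fix x :: "enat \<times> enat" assume x: "x \<in> UNIV - {(\<infinity>, \<infinity>)}"
  obtain a b where ab: "x = (a, b)" by (cases x)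
  show "x \<in> (\<Union>n. Ypc n)"
  proof (cases "a \<le> b")
    case True
    then obtain k where "a = enat k" using x ab by (cases a) auto
    then have "x \<in> Ypc (2 * k)" using ab True by (simp add: Ypc_def)
    then show ?thesis by blast
  next
    case False
    then obtain k where "b = enat k" by (cases b) auto
    then have "x \<in> Ypc (2 * k + 1)" using ab False by (simp add: Ypc_def)
    then show ?thesis by blast
  qed
qed

lemma Ypc_cof:
  assumes "open V" "(\<infinity>, \<infinity>) \<in> V"
  shows "\<exists>N. \<forall>n\<ge>N. Ypc n \<subseteq> V"
proof -
  obtain A B where AB0: "open A" "open B" "(\<infinity>, \<infinity>) \<in> A \<times> B" "A \<times> B \<subseteq> V"
    using open_prod_elim[OF assms(1) assms(2)] by blast
  then have AB: "open A" "open B" "\<infinity> \<in> A" "\<infinity> \<in> B" "A \<times> B \<subseteq> V" by auto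
  obtain a :: nat where a: "{enat a<..} \<subseteq> A" using AB open_enat_iff by metis
  obtain b :: nat where b: "{enat b<..} \<subseteq> B" using AB open_enat_iff by metis
  show ?thesis
  proof (intro exI allI impI)
    fix n assume n: "2 * (a + b + 1) \<le> n"
    define k where "k = n div 2"
    have k: "k > a" "k > b" using n k_def by auto
    have "Ypc n \<subseteq> A \<times> B"
    proof
      fix x assume "x \<in> Ypc n"
      then show "x \<in> A \<times> B"
      proof -
        have aA: "\<And>y. enat a < y \<Longrightarrow> y \<in> A" and bB: "\<And>y. enat b < y \<Longrightarrow> y \<in> B"
          using a b by auto
        have ka: "enat a < enat k" and kb: "enat b < enat k" using k by simp_all
        have h1: "y \<in> A \<and> y \<in> B" if "enat k \<le> y" for y
        proof -
          have "enat a < y" using ka that by (rule less_le_trans)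
          moreover have "enat b < y" using kb that by (rule less_le_trans)
          ultimately show ?thesis using aA bB by blast
        qed
        have h2: "y \<in> A \<and> y \<in> B" if "enat k < y" for y
          using h1 that by simp
        have h3: "enat k \<in> A \<and> enat k \<in> B" using h1 by simp
        show ?thesis using \<open>x \<in> Ypc n\<close> h1 h2 h3 unfolding Ypc_def k_def[symmetric]
          by (auto split: if_splits)
      qed
    qed
    then show "Ypc n \<subseteq> V" using AB(5) by blast
  qed
qed



abbreviation PT :: "('a \<Rightarrow> bool) topology" where
  "PT \<equiv> product_topology (\<lambda>_. discrete_topology (UNIV :: bool set)) UNIV"

lemma topspace_PT: "topspace PT = UNIV"
  by simp

lemma topspace_chabauty: "topspace chabauty = {f. add_subgroup {x. f x}}"
  unfolding chabauty_def by simp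

lemma PT_single_open: "openin PT {g. g z = b}"
proof -
  have "openin PT {g \<in> topspace PT. g z \<in> {b}}"
    by (rule openin_continuous_map_preimage[OF continuous_map_product_projection]) auto
  then show ?thesis by simp
qed

lemma PT_single_closed: "closedin PT {g. g z = b}"
proof -
  have "closedin PT {g \<in> topspace PT. g z \<in> {b}}"
    by (rule closedin_continuous_map_preimage[OF continuous_map_product_projection]) auto
  then show ?thesis by simp
qed

lemma PT_fin_open: "finite A \<Longrightarrow> openin PT {g. \<forall>z\<in>A. g z = c z}"
proof (induction A rule: finite_induct)
  case empty then show ?case using openin_topspace[of PT] by simp
next
  case (insert a A)
  have eq: "{g. \<forall>z\<in>insert a A. g z = c z} = {g. g a = c a} \<inter> {g. \<forall>z\<in>A. g z = c z}" by auto
  show ?case unfolding eq by (rule openin_Int[OF PT_single_open insert.IH])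
qed

lemma PT_fin_closed: "finite A \<Longrightarrow> closedin PT {g. \<forall>z\<in>A. g z = c z}"
proof (induction A rule: finite_induct)
  case empty then show ?case using closedin_topspace[of PT] by simp
next
  case (insert a A)
  have eq: "{g. \<forall>z\<in>insert a A. g z = c z} = {g. g a = c a} \<inter> {g. \<forall>z\<in>A. g z = c z}" by auto
  show ?case unfolding eq by (rule closedin_Int[OF PT_single_closed insert.IH])
qed

lemma ch_fin_open: "finite A \<Longrightarrow> openin chabauty {g \<in> topspace chabauty. \<forall>z\<in>A. g z = c z}"
proof -
  assume "finite A"
  then have "openin chabauty ({g. \<forall>z\<in>A. g z = c z} \<inter> {f. add_subgroup {x. f x}})"
    unfolding chabauty_def by (intro openin_subtopology_Int PT_fin_open)
  then show ?thesis by (simp add: topspace_chabauty Int_commute Collect_conj_eq)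
qed

lemma ch_fin_closed: "finite A \<Longrightarrow> closedin chabauty {g \<in> topspace chabauty. \<forall>z\<in>A. g z = c z}"
proof -
  assume "finite A"
  then have "closedin chabauty ({g. \<forall>z\<in>A. g z = c z} \<inter> {f. add_subgroup {x. f x}})"
    unfolding chabauty_def closedin_subtopology using PT_fin_closed by blast
  then show ?thesis by (simp add: topspace_chabauty Int_commute Collect_conj_eq)
qed

lemma subgroups_closed: "closedin PT {f :: 'a::ab_group_add \<Rightarrow> bool. add_subgroup {x. f x}}"
proof -
  have eq: "{f :: 'a \<Rightarrow> bool. add_subgroup {x. f x}} =
     {g. g 0 = True} \<inter> (\<Inter>xy\<in>UNIV. {g. g (fst xy) = False} \<union> {g. g (snd xy) = False} \<union> {g. g (fst xy + snd xy) = True})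
       \<inter> (\<Inter>x\<in>UNIV. {g. g x = False} \<union> {g. g (- x) = True})"
    unfolding add_subgroup_def by auto
  have c2: "closedin PT (\<Inter>xy\<in>UNIV. {g. g (fst xy) = False} \<union> {g. g (snd xy) = False} \<union> {g. g (fst xy + snd xy) = True})"
    by (rule closedin_INT, simp, intro closedin_Un PT_single_closed)
  have c3: "closedin PT (\<Inter>x\<in>UNIV. {g. g x = False} \<union> {g. g (- x) = True})"
    by (rule closedin_INT, simp, intro closedin_Un PT_single_closed)
  show ?thesis unfolding eq
    by (rule closedin_Int[OF closedin_Int[OF PT_single_closed c2] c3])
qed

lemma compact_chabauty: "compact_space (chabauty :: ('a::ab_group_add \<Rightarrow> bool) topology)"
proof -
  have "compact_space (PT :: ('a \<Rightarrow> bool) topology)"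
    by (simp add: compact_space_product_topology compact_space_discrete_topology)
  then have "compactin PT {f :: 'a \<Rightarrow> bool. add_subgroup {x. f x}}"
    using subgroups_closed closedin_compact_space by blast
  then show ?thesis unfolding chabauty_def by (rule compact_space_subtopology)
qed

lemma Hausdorff_chabauty: "Hausdorff_space (chabauty :: ('a::ab_group_add \<Rightarrow> bool) topology)"
  unfolding chabauty_def
  by (intro Hausdorff_space_subtopology) (simp add: Hausdorff_space_product_topology)



type_synonym z2 = "int \<times> int"

definition smul :: "int \<Rightarrow> z2 \<Rightarrow> z2" where
  "smul k x = (k * fst x, k * snd x)"

definition nrm :: "z2 \<Rightarrow> int" where
  "nrm x = (fst x)^2 + (snd x)^2"

definition det2 :: "z2 \<Rightarrow> z2 \<Rightarrow> int" where
  "det2 x y = fst x * snd y - snd x * fst y"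

definition prec :: "z2 \<Rightarrow> z2 \<Rightarrow> bool" where
  "prec x y \<longleftrightarrow> nrm x < nrm y \<or> (nrm x = nrm y \<and> (fst x < fst y \<or> (fst x = fst y \<and> snd x < snd y)))"

lemma prec_irrefl: "\<not> prec x x" by (simp add: prec_def)
lemma prec_asym: "prec x y \<Longrightarrow> \<not> prec y x" by (auto simp: prec_def)
lemma prec_trans: "prec x y \<Longrightarrow> prec y z \<Longrightarrow> prec x z" by (auto simp: prec_def)
lemma prec_total: "x \<noteq> y \<Longrightarrow> prec x y \<or> prec y x"
  by (cases x; cases y) (auto simp: prec_def)
lemma prec_nrm: "prec x y \<Longrightarrow> nrm x \<le> nrm y" by (auto simp: prec_def)

lemma abs_le_sq: "\<bar>a::int\<bar> \<le> a^2"
proof (cases "a = 0")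
  case False
  then have "1 \<le> \<bar>a\<bar>" by simp
  then have "\<bar>a\<bar> * 1 \<le> \<bar>a\<bar> * \<bar>a\<bar>" by (intro mult_left_mono) auto
  then show ?thesis by (simp add: power2_eq_square abs_mult_self_eq)
qed simp

lemma nrm_nonneg: "nrm x \<ge> 0" by (simp add: nrm_def)

lemma nrm_pos: "x \<noteq> 0 \<Longrightarrow> nrm x > 0"
  by (cases x) (auto simp: nrm_def zero_prod_def add_pos_nonneg add_nonneg_pos)

lemma finite_prec: "finite {y. prec y w}"
proof -
  define M where "M = nrm w"
  have "{y. prec y w} \<subseteq> {-M..M} \<times> {-M..M}"
  proof
    fix y assume "y \<in> {y. prec y w}"
    then have "nrm y \<le> M" using prec_nrm M_def by auto
    moreover have "\<bar>fst y\<bar> \<le> nrm y" "\<bar>snd y\<bar> \<le> nrm y"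
      using abs_le_sq[of "fst y"] abs_le_sq[of "snd y"] by (auto simp: nrm_def)
    ultimately show "y \<in> {-M..M} \<times> {-M..M}" by (cases y) auto
  qed
  then show ?thesis by (rule finite_subset) auto
qed

lemma finite_min_prec: "finite A \<Longrightarrow> A \<noteq> {} \<Longrightarrow> \<exists>m\<in>A. \<forall>y\<in>A. \<not> prec y m"
proof (induction A rule: finite_ne_induct)
  case (singleton x) then show ?case by (simp add: prec_irrefl)
next
  case (insert x F)
  then obtain m where m: "m \<in> F" "\<forall>y\<in>F. \<not> prec y m" by blast
  show ?case
  proof (cases "prec x m")
    case True
    then show ?thesis using m prec_irrefl prec_trans by blast
  next
    case False then show ?thesis using m by blast
  qed
qed

lemma min_prec: "y0 \<in> S \<Longrightarrow> \<exists>m\<in>S. \<forall>y\<in>S. \<not> prec y m"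
proof -
  assume y0: "y0 \<in> S"
  define S' where "S' = S \<inter> insert y0 {y. prec y y0}"
  have "finite S'" unfolding S'_def using finite_prec by auto
  moreover have "S' \<noteq> {}" using y0 S'_def by auto
  ultimately obtain m where m: "m \<in> S'" "\<forall>y\<in>S'. \<not> prec y m" using finite_min_prec by blast
  have mS: "\<not> prec y m" if "y \<in> S" for y
  proof
    assume ym: "prec y m"
    have "y \<notin> S'" using m(2) ym by blast
    then have "\<not> prec y y0" "y \<noteq> y0" using that S'_def by auto
    then have "prec y0 y" using prec_total by blast
    moreover have "m = y0 \<or> prec m y0" using m(1) S'_def by auto
    ultimately have "prec m y" using prec_trans by blast
    then show False using ym prec_asym by blast
  qed
  have "m \<in> S" using m(1) S'_def by auto
  then show ?thesis using mS by blast
qed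

definition sg :: "(z2 \<Rightarrow> bool) \<Rightarrow> bool" where
  "sg f \<longleftrightarrow> add_subgroup {x. f x}"

lemma sg0: "sg f \<Longrightarrow> f 0" by (simp add: sg_def add_subgroup_def)
lemma sgadd: assumes "sg f" "f x" "f y" shows "f (x + y)"
proof -
  have "x \<in> {x. f x}" "y \<in> {x. f x}" using assms by auto
  then have "x + y \<in> {x. f x}" using assms(1) unfolding sg_def add_subgroup_def by blast
  then show ?thesis by simp
qed
lemma sgneg: assumes "sg f" "f x" shows "f (- x)"
proof -
  have "x \<in> {x. f x}" using assms by auto
  then have "- x \<in> {x. f x}" using assms(1) unfolding sg_def add_subgroup_def by blast
  then show ?thesis by simp
qed
lemma sgdiff: "sg f \<Longrightarrow> f x \<Longrightarrow> f y \<Longrightarrow> f (x - y)"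
  using sgadd sgneg by (metis diff_conv_add_uminus)

lemma smul_nat: "sg f \<Longrightarrow> f x \<Longrightarrow> f (smul (int n) x)"
proof (induction n)
  case 0 then show ?case using sg0 by (simp add: smul_def zero_prod_def)
next
  case (Suc n)
  have "smul (int (Suc n)) x = x + smul (int n) x" by (cases x) (simp add: smul_def algebra_simps)
  then show ?case using Suc sgadd by simp
qed

lemma sgsmul: assumes a: "sg f" "f x" shows "f (smul k x)"
proof (cases k rule: int_cases)
  case (nonneg n) then show ?thesis using smul_nat a by simp
next
  case (neg n)
  have "smul k x = - smul (int (Suc n)) x" by (simp only: neg smul_def mult_minus_left uminus_Pair)
  then show ?thesis using sgneg[OF a(1) smul_nat[OF a, of "Suc n"]] by simp
qed

lemma sg_topspace: "f \<in> topspace chabauty \<longleftrightarrow> sg f"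
  by (simp add: topspace_chabauty sg_def)

section \<open>Lattices\<close>

lemma lattice_mod:
  assumes f: "sg f" and u: "f u" and v: "f v" and d: "det2 u v \<noteq> 0"
  defines "D \<equiv> \<bar>det2 u v\<bar>"
  shows "f x \<longleftrightarrow> f (fst x mod D, snd x mod D)"
proof -
  define d where "d = det2 u v"
  have e1: "f (d, 0)"
  proof -
    have "(d, 0) = smul (snd v) u - smul (snd u) v" by (simp add: smul_def d_def det2_def algebra_simps)
    then show ?thesis using f u v sgsmul sgdiff by metis
  qed
  have e2: "f (0, d)"
  proof -
    have "(0, d) = smul (fst u) v - smul (fst v) u" by (simp add: smul_def d_def det2_def algebra_simps)
    then show ?thesis using f u v sgsmul sgdiff by metis
  qed
  have E1: "f (D, 0)"
  proof -
    have "(D, 0) = smul (sgn d) (d, 0)" by (simp add: smul_def D_def d_def abs_sgn)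
    then show ?thesis using sgsmul[OF f e1] by metis
  qed
  have E2: "f (0, D)"
  proof -
    have "(0, D) = smul (sgn d) (0, d)" by (simp add: smul_def D_def d_def abs_sgn)
    then show ?thesis using sgsmul[OF f e2] by metis
  qed
  have Dij: "f (D * i, D * j)" for i j
  proof -
    have "(D * i, D * j) = smul i (D, 0) + smul j (0, D)" by (simp add: smul_def algebra_simps)
    then show ?thesis using sgadd[OF f sgsmul[OF f E1] sgsmul[OF f E2]] by metis
  qed
  have dec: "x = (fst x mod D, snd x mod D) + (D * (fst x div D), D * (snd x div D))"
    by (cases x) (simp add: mult.commute)
  show ?thesis
  proof
    assume "f x"
    have "(fst x mod D, snd x mod D) = x - (D * (fst x div D), D * (snd x div D))"
      using dec by (metis add_diff_cancel_right')
    then show "f (fst x mod D, snd x mod D)" using sgdiff[OF f \<open>f x\<close> Dij] by metis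
  next
    assume "f (fst x mod D, snd x mod D)"
    then show "f x" using sgadd[OF f _ Dij] dec by metis
  qed
qed

definition bx :: "int \<Rightarrow> z2 set" where
  "bx D = {0..<D} \<times> {0..<D}"

lemma finite_bx: "finite (bx D)" by (simp add: bx_def)

lemma mod_in_bx: "D > 0 \<Longrightarrow> (fst x mod D, snd x mod D) \<in> bx D"
  by (simp add: bx_def)

lemma rank2_isolated:
  assumes f: "sg f" and u: "f u" and v: "f v" and d: "det2 u v \<noteq> 0"
  shows "openin chabauty {f}"
proof -
  define D where "D = \<bar>det2 u v\<bar>"
  have Dpos: "D > 0" using d D_def by simp
  define A where "A = insert u (insert v (bx D))"
  have "finite A" using finite_bx A_def by simp
  then have o: "openin chabauty {g \<in> topspace chabauty. \<forall>z\<in>A. g z = f z}" by (rule ch_fin_open)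
  have "{g \<in> topspace chabauty. \<forall>z\<in>A. g z = f z} = {f}"
  proof (intro equalityI subsetI)
    fix g assume "g \<in> {g \<in> topspace chabauty. \<forall>z\<in>A. g z = f z}"
    then have g: "sg g" "g u" "g v" "\<forall>z\<in>bx D. g z = f z" using u v A_def sg_topspace by auto
    have "g x = f x" for x
    proof -
      have "g x = g (fst x mod D, snd x mod D)" using lattice_mod[OF g(1-3) d] D_def by simp
      also have "\<dots> = f (fst x mod D, snd x mod D)" using g(4) mod_in_bx[OF Dpos] by blast
      also have "\<dots> = f x" using lattice_mod[OF f u v d] D_def by simp
      finally show ?thesis .
    qed
    then show "g \<in> {f}" by auto
  next
    fix g assume "g \<in> {f}"
    then show "g \<in> {g \<in> topspace chabauty. \<forall>z\<in>A. g z = f z}" using f sg_topspace by auto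
  qed
  then show ?thesis using o by simp
qed



definition Wset :: "z2 set" where "Wset = {w. w \<noteq> 0 \<and> prec w (- w)}"

definition Fw :: "z2 \<Rightarrow> (z2 \<Rightarrow> bool) set" where
  "Fw w = {g \<in> topspace chabauty. g w \<and> (\<forall>y. y \<noteq> 0 \<and> prec y w \<longrightarrow> \<not> g y)}"

definition cyc :: "z2 \<Rightarrow> z2 \<Rightarrow> bool" where "cyc w = (\<lambda>x. \<exists>k. x = smul k w)"

definition perp :: "z2 \<Rightarrow> z2" where "perp w = (- snd w, fst w)"

lemma Fw_cond: "Fw w = {g \<in> topspace chabauty. \<forall>z\<in>insert w {y. y \<noteq> 0 \<and> prec y w}. g z = (z = w)}"
  unfolding Fw_def using prec_irrefl by auto

lemma Fw_open: "openin chabauty (Fw w)"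
  unfolding Fw_cond by (rule ch_fin_open) (simp add: finite_prec)

lemma Fw_closed: "closedin chabauty (Fw w)"
  unfolding Fw_cond by (rule ch_fin_closed) (simp add: finite_prec)

lemma Fw_sub: "Fw w \<subseteq> topspace chabauty" unfolding Fw_def by auto

lemma nrm_comb: "nrm (smul k w + smul j (perp w)) = (k^2 + j^2) * nrm w"
  by (cases w) (simp add: smul_def nrm_def perp_def power2_eq_square algebra_simps)

lemma W_ne: "w \<in> Wset \<Longrightarrow> w \<noteq> 0" by (simp add: Wset_def)

lemma small_comb:
  assumes w: "w \<in> Wset" and y: "y = smul k w + smul j (perp w)" and y0: "y \<noteq> 0"
    and p: "prec y w" and j: "j = 0 \<or> \<bar>j\<bar> \<ge> 2"
  shows False
proof -
  have nw: "nrm w > 0" using nrm_pos W_ne[OF w] by blast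
  have "(k^2 + j^2) * nrm w \<le> 1 * nrm w" using prec_nrm[OF p] nrm_comb y by simp
  then have kj: "k^2 + j^2 \<le> 1" using nw by (simp add: mult_le_cancel_right)
  have sq: "\<bar>a\<bar> \<ge> 2 \<Longrightarrow> a^2 \<ge> 4" for a :: int
  proof -
    assume "\<bar>a\<bar> \<ge> 2"
    then have "\<bar>a\<bar> * \<bar>a\<bar> \<ge> 2 * 2" by (intro mult_mono) auto
    then show ?thesis by (simp add: power2_eq_square abs_mult_self_eq)
  qed
  have "j = 0"
  proof (rule ccontr)
    assume "j \<noteq> 0" then have "j^2 \<ge> 4" using j sq by auto
    moreover have "k^2 \<ge> 0" by simp
    ultimately show False using kj by linarith
  qed
  have "\<bar>k\<bar> < 2"
  proof (rule ccontr)
    assume "\<not> \<bar>k\<bar> < 2" then have "k^2 \<ge> 4" using sq by auto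
    then show False using kj \<open>j = 0\<close> by simp
  qed
  then have "k = 0 \<or> k = 1 \<or> k = -1" by auto
  moreover have "smul 0 w = 0" "smul 1 w = w" "smul (-1) w = - w" "smul 0 (perp w) = 0"
    by (cases w; simp add: smul_def zero_prod_def)+
  moreover have "\<not> prec (- w) w" using w prec_asym Wset_def by blast
  ultimately show False using y y0 p \<open>j = 0\<close> prec_irrefl[of w] by auto
qed

lemma smul_add: "smul a w + smul b w = smul (a + b) w"
  by (cases w) (simp add: smul_def algebra_simps)
lemma smul_neg: "- smul a w = smul (- a) w"
  by (cases w) (simp add: smul_def)

lemma sg_intro:
  assumes "f 0" "\<And>x y. f x \<Longrightarrow> f y \<Longrightarrow> f (x + y)" "\<And>x. f x \<Longrightarrow> f (- x)"
  shows "sg f"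
  using assms unfolding sg_def add_subgroup_def by auto

lemma cyc_sg: "sg (cyc w)"
proof (rule sg_intro)
  show "cyc w 0" unfolding cyc_def by (rule exI[of _ 0]) (cases w, simp add: smul_def zero_prod_def)
  fix x y assume "cyc w x" "cyc w y"
  then obtain a b where "x = smul a w" "y = smul b w" unfolding cyc_def by blast
  then show "cyc w (x + y)" unfolding cyc_def using smul_add by blast
next
  fix x assume "cyc w x"
  then obtain a where "x = smul a w" unfolding cyc_def by blast
  then show "cyc w (- x)" unfolding cyc_def using smul_neg by blast
qed

lemma cyc_in: assumes w: "w \<in> Wset" shows "cyc w \<in> Fw w"
proof -
  have "cyc w w" unfolding cyc_def by (rule exI[of _ 1]) (cases w, simp add: smul_def)
  moreover have "\<not> cyc w y" if "y \<noteq> 0" "prec y w" for y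
  proof
    assume "cyc w y"
    then obtain k where k: "y = smul k w" unfolding cyc_def by blast
    have "smul 0 (perp w) = 0" by (simp add: smul_def zero_prod_def)
    then have "y = smul k w + smul 0 (perp w)" using k by simp
    then show False using small_comb[OF w _ that(1) that(2)] by blast
  qed
  ultimately show ?thesis unfolding Fw_def using cyc_sg sg_topspace by auto
qed



lemma Fw_sg: "f \<in> Fw w \<Longrightarrow> sg f" unfolding Fw_def using sg_topspace by auto
lemma Fw_min: assumes "f \<in> Fw w" "y \<noteq> 0" "f y" shows "\<not> prec y w"
  using assms unfolding Fw_def by blast
lemma Fw_w: "f \<in> Fw w \<Longrightarrow> f w" unfolding Fw_def by auto

lemma sq_less: "\<bar>a::int\<bar> < \<bar>b\<bar> \<Longrightarrow> a^2 < b^2"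
proof -
  assume "\<bar>a\<bar> < \<bar>b\<bar>"
  then have "\<bar>a\<bar>^2 < \<bar>b\<bar>^2" by (intro power_strict_mono) auto
  then show ?thesis by simp
qed

lemma dep_cyc:
  assumes f: "f \<in> Fw w" and w: "w \<noteq> 0" and x: "f x" and d: "det2 x w = 0"
  shows "\<exists>k. x = smul k w"
proof -
  obtain p q where wpq: "w = (p, q)" by (cases w)
  obtain r s where xrs: "x = (r, s)" by (cases x)
  have sgf: "sg f" using f Fw_sg by blast
  have dd: "r * q = s * p" using d by (simp add: det2_def wpq xrs)
  have nw: "nrm w > 0" using nrm_pos w by blast
  show ?thesis
  proof (cases "p = 0")
    case False
    define k where "k = r div p"
    define y where "y = x - smul k w"
    have fy: "f y" unfolding y_def using sgdiff[OF sgf x sgsmul[OF sgf Fw_w[OF f]]] .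
    have y1: "fst y = r mod p" by (simp add: y_def smul_def xrs wpq k_def minus_div_mult_eq_mod[symmetric] mult.commute)
    have y2: "snd y = s - k * q" by (simp add: y_def smul_def xrs wpq)
    have y2p: "snd y * p = fst y * q"
    proof -
      have "snd y * p = s * p - k * q * p" by (simp add: y2 algebra_simps)
      also have "\<dots> = r * q - k * p * q" using dd by (simp add: algebra_simps)
      also have "\<dots> = (r - k * p) * q" by (simp add: algebra_simps)
      also have "r - k * p = fst y" by (simp add: y_def smul_def xrs wpq)
      finally show ?thesis .
    qed
    show ?thesis
    proof (cases "y = 0")
      case True
      then have "x = smul k w" unfolding y_def by simp
      then show ?thesis by blast
    next
      case False
      have "\<bar>fst y\<bar> < \<bar>p\<bar>" using y1 abs_mod_less[OF \<open>p \<noteq> 0\<close>] by simp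
      then have l1: "(fst y)^2 < p^2" by (rule sq_less)
      have "(snd y)^2 * p^2 = (snd y * p)^2" by (simp add: power_mult_distrib)
      also have "\<dots> = (fst y * q)^2" by (simp only: y2p)
      also have "\<dots> = (fst y)^2 * q^2" by (simp add: power_mult_distrib)
      finally have sq: "(snd y)^2 * p^2 = (fst y)^2 * q^2" .
      have eq: "nrm y * p^2 = (fst y)^2 * nrm w"
        using sq by (simp add: nrm_def wpq algebra_simps)
      have "(fst y)^2 * nrm w < p^2 * nrm w" using l1 nw by (rule mult_strict_right_mono)
      then have "nrm y * p^2 < nrm w * p^2" using eq by (simp add: mult.commute)
      then have "nrm y < nrm w" by (simp add: mult_less_cancel_right)
      then have "prec y w" by (simp add: prec_def)
      then show ?thesis using Fw_min[OF f False fy] by blast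
    qed
  next
    case True
    then have q0: "q \<noteq> 0" using w wpq by (simp add: zero_prod_def)
    then have r0: "r = 0" using dd True by simp
    define k where "k = s div q"
    define y where "y = x - smul k w"
    have fy: "f y" unfolding y_def using sgdiff[OF sgf x sgsmul[OF sgf Fw_w[OF f]]] .
    have yv: "y = (0, s mod q)"
      by (simp add: y_def smul_def xrs wpq k_def True r0 minus_div_mult_eq_mod[symmetric] mult.commute)
    show ?thesis
    proof (cases "y = 0")
      case True
      then have "x = smul k w" unfolding y_def by simp
      then show ?thesis by blast
    next
      case False
      have "(s mod q)^2 < q^2" using abs_mod_less[OF q0] by (rule sq_less)
      then have "nrm y < nrm w" by (simp add: nrm_def yv wpq True)
      then have "prec y w" by (simp add: prec_def)
      then show ?thesis using Fw_min[OF f False fy] by blast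
    qed
  qed
qed

lemma Fw_not_cyc:
  assumes w: "w \<in> Wset" and f: "f \<in> Fw w" and nc: "f \<noteq> cyc w"
  shows "\<exists>u. f u \<and> det2 u w \<noteq> 0"
proof (rule ccontr)
  assume "\<not> (\<exists>u. f u \<and> det2 u w \<noteq> 0)"
  then have "\<forall>u. f u \<longrightarrow> cyc w u" using dep_cyc[OF f W_ne[OF w]] unfolding cyc_def by blast
  moreover have "\<forall>u. cyc w u \<longrightarrow> f u"
    unfolding cyc_def using sgsmul[OF Fw_sg[OF f] Fw_w[OF f]] by blast
  ultimately have "f = cyc w" by blast
  then show False using nc by blast
qed

lemma Fw_isolated:
  assumes w: "w \<in> Wset" and f: "f \<in> Fw w" and nc: "f \<noteq> cyc w"
  shows "openin chabauty {f}"
proof -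
  obtain u where "f u" "det2 u w \<noteq> 0" using Fw_not_cyc[OF assms] by blast
  then show ?thesis using rank2_isolated[OF Fw_sg[OF f] _ Fw_w[OF f]] by blast
qed


section \<open>Countability\<close>

definition Rk2 :: "(z2 \<Rightarrow> bool) set" where
  "Rk2 = {f. sg f \<and> (\<exists>u v. f u \<and> f v \<and> det2 u v \<noteq> 0)}"

definition uvp :: "(z2 \<Rightarrow> bool) \<Rightarrow> z2 \<times> z2" where
  "uvp f = (SOME p. f (fst p) \<and> f (snd p) \<and> det2 (fst p) (snd p) \<noteq> 0)"

definition Dd :: "(z2 \<Rightarrow> bool) \<Rightarrow> int" where
  "Dd f = \<bar>det2 (fst (uvp f)) (snd (uvp f))\<bar>"

definition encd :: "(z2 \<Rightarrow> bool) \<Rightarrow> int \<times> z2 set" where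
  "encd f = (Dd f, {z \<in> bx (Dd f). f z})"

lemma uvp: assumes "f \<in> Rk2"
  shows "f (fst (uvp f)) \<and> f (snd (uvp f)) \<and> det2 (fst (uvp f)) (snd (uvp f)) \<noteq> 0"
proof -
  obtain u v where "f u" "f v" "det2 u v \<noteq> 0" using assms unfolding Rk2_def by blast
  then have "\<exists>p. f (fst p) \<and> f (snd p) \<and> det2 (fst p) (snd p) \<noteq> 0"
    by (intro exI[of _ "(u, v)"]) simp
  then show ?thesis unfolding uvp_def by (rule someI_ex)
qed

lemma encd_mod: assumes f: "f \<in> Rk2" shows "f x \<longleftrightarrow> f (fst x mod Dd f, snd x mod Dd f)"
proof -
  have s: "sg f" using f unfolding Rk2_def by blast
  have u: "f (fst (uvp f))" and v: "f (snd (uvp f))" and d: "det2 (fst (uvp f)) (snd (uvp f)) \<noteq> 0"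
    using uvp[OF f] by auto
  show ?thesis using lattice_mod[OF s u v d, of x] unfolding Dd_def .
qed

lemma Dd_pos: assumes "f \<in> Rk2" shows "Dd f > 0"
proof -
  have "det2 (fst (uvp f)) (snd (uvp f)) \<noteq> 0" using uvp[OF assms] by blast
  then show ?thesis unfolding Dd_def by simp
qed

lemma encd_inj: "inj_on encd Rk2"
proof (rule inj_onI)
  fix f g assume f: "f \<in> Rk2" and g: "g \<in> Rk2" and e: "encd f = encd g"
  have e': "(Dd f, {z \<in> bx (Dd f). f z}) = (Dd g, {z \<in> bx (Dd g). g z})"
    using e unfolding encd_def .
  have D: "Dd f = Dd g" using arg_cong[OF e', of fst] by (simp only: fst_conv)
  have S: "{z \<in> bx (Dd f). f z} = {z \<in> bx (Dd g). g z}" using arg_cong[OF e', of snd] by (simp only: snd_conv)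
  show "f = g"
  proof (rule ext)
    fix x
    define z where "z = (fst x mod Dd f, snd x mod Dd f)"
    have zb: "z \<in> bx (Dd f)" unfolding z_def by (rule mod_in_bx[OF Dd_pos[OF f]])
    have "f x = f z" unfolding z_def by (rule encd_mod[OF f])
    also have "\<dots> = g z"
    proof -
      have "(z \<in> {z \<in> bx (Dd f). f z}) = (z \<in> {z \<in> bx (Dd g). g z})" by (simp only: S)
      then show ?thesis using zb D by simp
    qed
    also have "\<dots> = g x" unfolding z_def D by (rule encd_mod[OF g, symmetric])
    finally show "f x = g x" .
  qed
qed

lemma countable_Rk2: "countable Rk2"
proof (rule countable_image_inj_on[OF _ encd_inj])
  have "encd ` Rk2 \<subseteq> UNIV \<times> Collect finite"
  proof
    fix c assume "c \<in> encd ` Rk2"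
    then obtain f where c: "c = encd f" by blast
    have "finite {z \<in> bx (Dd f). f z}" by (rule finite_subset[OF _ finite_bx]) auto
    then show "c \<in> UNIV \<times> Collect finite" unfolding c encd_def by simp
  qed
  moreover have "countable ((UNIV :: int set) \<times> Collect (finite :: z2 set \<Rightarrow> bool))"
    using countable_Collect_finite by (intro countable_SIGMA) auto
  ultimately show "countable (encd ` Rk2)" by (rule countable_subset)
qed

lemma countable_Fw: assumes w: "w \<in> Wset" shows "countable (Fw w)"
proof -
  have "Fw w \<subseteq> insert (cyc w) Rk2"
  proof
    fix f assume f: "f \<in> Fw w"
    show "f \<in> insert (cyc w) Rk2"
    proof (cases "f = cyc w")
      case False
      then obtain u where "f u" "det2 u w \<noteq> 0" using Fw_not_cyc[OF w f] by blast
      then have "f \<in> Rk2" unfolding Rk2_def mem_Collect_eq using Fw_sg[OF f] Fw_w[OF f] by blast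
      then show ?thesis by simp
    qed simp
  qed
  moreover have "countable (insert (cyc w) Rk2)" using countable_Rk2 by simp
  ultimately show ?thesis by (rule countable_subset)
qed


section \<open>Infinitude\<close>

definition Hn :: "z2 \<Rightarrow> nat \<Rightarrow> z2 \<Rightarrow> bool" where
  "Hn w n = (\<lambda>x. \<exists>k m. x = smul k w + smul (m * int n) (perp w))"

lemma Hn_sg: "sg (Hn w n)"
proof (rule sg_intro)
  show "Hn w n 0" unfolding Hn_def
    by (rule exI[of _ 0], rule exI[of _ 0]) (simp add: smul_def zero_prod_def)
  fix x y assume "Hn w n x" "Hn w n y"
  then obtain k1 m1 k2 m2 where "x = smul k1 w + smul (m1 * int n) (perp w)" "y = smul k2 w + smul (m2 * int n) (perp w)"
    unfolding Hn_def by blast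
  then have "x + y = smul (k1 + k2) w + smul ((m1 + m2) * int n) (perp w)"
    by (cases w) (simp add: smul_def perp_def algebra_simps)
  then show "Hn w n (x + y)" unfolding Hn_def by blast
next
  fix x assume "Hn w n x"
  then obtain k m where "x = smul k w + smul (m * int n) (perp w)" unfolding Hn_def by blast
  then have "- x = smul (- k) w + smul ((- m) * int n) (perp w)"
    by (cases w) (simp add: smul_def perp_def algebra_simps)
  then show "Hn w n (- x)" unfolding Hn_def by blast
qed

lemma Hn_in: assumes w: "w \<in> Wset" and n: "n \<ge> 2" shows "Hn w n \<in> Fw w"
proof -
  have "Hn w n w" unfolding Hn_def
    by (rule exI[of _ 1], rule exI[of _ 0]) (cases w, simp add: smul_def)
  moreover have "\<not> Hn w n y" if "y \<noteq> 0" "prec y w" for y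
  proof
    assume "Hn w n y"
    then obtain k m where y: "y = smul k w + smul (m * int n) (perp w)" unfolding Hn_def by blast
    have "m * int n = 0 \<or> \<bar>m * int n\<bar> \<ge> 2"
    proof (cases "m = 0")
      case False
      then have "\<bar>m\<bar> \<ge> 1" by simp
      then have "\<bar>m\<bar> * int n \<ge> 1 * int n" by (intro mult_right_mono) auto
      then have "\<bar>m\<bar> * int n \<ge> 2" using n by linarith
      then show ?thesis by (simp add: abs_mult)
    qed simp
    then show False using small_comb[OF w y that] by blast
  qed
  ultimately show ?thesis unfolding Fw_def using Hn_sg sg_topspace by auto
qed

lemma Hn_distinct:
  assumes w: "w \<in> Wset" and n: "2 \<le> n" "n < n'"
  shows "Hn w n \<noteq> Hn w n'"
proof
  assume e: "Hn w n = Hn w n'"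
  have "Hn w n (smul (int n) (perp w))" unfolding Hn_def
    by (rule exI[of _ 0], rule exI[of _ 1]) (cases w, simp add: smul_def perp_def)
  then have "Hn w n' (smul (int n) (perp w))" using e by simp
  then obtain k m where km: "smul (int n) (perp w) = smul k w + smul (m * int n') (perp w)"
    unfolding Hn_def by blast
  obtain p q where wpq: "w = (p, q)" by (cases w)
  define t where "t = int n - m * int n'"
  have c1: "- t * q = k * p" and c2: "t * p = k * q"
    using km by (simp_all add: wpq smul_def perp_def t_def algebra_simps)
  have "t * nrm w = (t * p) * p + (t * q) * q" by (simp add: nrm_def wpq power2_eq_square algebra_simps)
  also have "\<dots> = (k * q) * p + (- (k * p)) * q"
  proof -
    have c1': "t * q = - (k * p)" using arg_cong[OF c1, of uminus] by simp
    show ?thesis by (simp only: c2 c1')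
  qed
  also have "\<dots> = 0" by (simp add: algebra_simps)
  finally have "t * nrm w = 0" .
  moreover have "nrm w > 0" using nrm_pos W_ne[OF w] by blast
  ultimately have "t = 0" by simp
  then have nm: "int n = m * int n'" unfolding t_def by simp
  show False
  proof (cases "m \<le> 0")
    case True
    then have "m * int n' \<le> 0" by (simp add: mult_nonpos_nonneg)
    then show False using nm n by simp
  next
    case False
    then have h: "m * int n' \<ge> 1 * int n'" by (intro mult_right_mono) auto
    have "int n' \<le> int n" using h unfolding nm[symmetric] by simp
    then show False using n by simp
  qed
qed

lemma infinite_Fw: assumes w: "w \<in> Wset" shows "infinite (Fw w)"
proof
  assume fin: "finite (Fw w)"
  have "Hn w ` {2..} \<subseteq> Fw w" using Hn_in[OF w] by auto
  then have "finite (Hn w ` {2..})" using fin finite_subset by blast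
  moreover have "inj_on (Hn w) {2..}"
  proof (rule inj_onI)
    fix a b assume "a \<in> {2::nat..}" "b \<in> {2..}" "Hn w a = Hn w b"
    then have ab: "2 \<le> a" "2 \<le> b" "Hn w a = Hn w b" by auto
    show "a = b"
    proof (rule ccontr)
      assume "a \<noteq> b"
      then have "a < b \<or> b < a" by arith
      then show False using Hn_distinct[OF w ab(1), of b] Hn_distinct[OF w ab(2), of a] ab(3) by auto
    qed
  qed
  ultimately have "finite {2::nat..}" using finite_imageD by blast
  then show False using infinite_Ici by blast
qed


section \<open>Partition\<close>

definition zsg :: "z2 \<Rightarrow> bool" where "zsg = (\<lambda>x. x = 0)"

lemma zsg_top: "zsg \<in> topspace chabauty"
  unfolding sg_topspace zsg_def by (rule sg_intro) auto

lemma zsg_notin: assumes "w \<in> Wset" shows "zsg \<notin> Fw w"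
proof
  assume "zsg \<in> Fw w"
  then have "zsg w" by (rule Fw_w)
  then show False using W_ne[OF assms] unfolding zsg_def by simp
qed

lemma exists_Fw:
  assumes f: "f \<in> topspace chabauty" and nz: "f \<noteq> zsg"
  shows "\<exists>w\<in>Wset. f \<in> Fw w"
proof -
  have sgf: "sg f" using f sg_topspace by blast
  have "\<exists>x. x \<noteq> 0 \<and> f x"
  proof (rule ccontr)
    assume "\<not> (\<exists>x. x \<noteq> 0 \<and> f x)"
    then have "f = zsg"
    proof -
      assume a: "\<not> (\<exists>x. x \<noteq> 0 \<and> f x)"
      show "f = zsg"
      proof (rule ext)
        fix x show "f x = zsg x"
        proof (cases "x = 0")
          case True then show ?thesis using sg0[OF sgf] unfolding zsg_def by simp
        next
          case False then have "\<not> f x" using a by blast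
          then show ?thesis using False unfolding zsg_def by simp
        qed
      qed
    qed
    then show False using nz by blast
  qed
  then obtain x0 where x0: "x0 \<in> {x. x \<noteq> 0 \<and> f x}" by blast
  obtain m where m: "m \<in> {x. x \<noteq> 0 \<and> f x}" "\<forall>y\<in>{x. x \<noteq> 0 \<and> f x}. \<not> prec y m"
    using min_prec[OF x0] by blast
  have m0: "m \<noteq> 0" "f m" using m by auto
  have "- m \<noteq> 0" using m0(1) by simp
  have "f (- m)" by (rule sgneg[OF sgf m0(2)])
  have "- m \<in> {x. x \<noteq> 0 \<and> f x}" using \<open>- m \<noteq> 0\<close> \<open>f (- m)\<close> by simp
  then have np: "\<not> prec (- m) m" using m(2) by blast
  have "- m \<noteq> m" using m0 by (cases m) (auto simp: zero_prod_def)
  then have "prec m (- m)" using np prec_total by blast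
  then have "m \<in> Wset" using m0 Wset_def by blast
  moreover have "f \<in> Fw m"
  proof -
    have "\<forall>y. y \<noteq> 0 \<and> prec y m \<longrightarrow> \<not> f y"
    proof (intro allI impI)
      fix y assume y: "y \<noteq> 0 \<and> prec y m"
      show "\<not> f y"
      proof
        assume "f y" then have "y \<in> {x. x \<noteq> 0 \<and> f x}" using y by simp
        then show False using m(2) y by blast
      qed
    qed
    then show ?thesis unfolding Fw_def using f m0(2) by blast
  qed
  ultimately show ?thesis by blast
qed

lemma Fw_disj:
  assumes "w \<in> Wset" "w' \<in> Wset" "w \<noteq> w'"
  shows "Fw w \<inter> Fw w' = {}"
proof (rule ccontr)
  assume "Fw w \<inter> Fw w' \<noteq> {}"
  then obtain f where f: "f \<in> Fw w" "f \<in> Fw w'" by blast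
  have n1: "\<not> prec w w'" by (rule Fw_min[OF f(2) W_ne[OF assms(1)] Fw_w[OF f(1)]])
  have n2: "\<not> prec w' w" by (rule Fw_min[OF f(1) W_ne[OF assms(2)] Fw_w[OF f(2)]])
  show False using prec_total[OF assms(3)] n1 n2 by blast
qed

lemma Fw_hom:
  assumes w: "w \<in> Wset"
  shows "subtopology chabauty (Fw w) homeomorphic_space (euclidean :: enat topology)"
proof (rule enat_char[where q = "cyc w"])
  have ts: "topspace (subtopology chabauty (Fw w)) = Fw w"
    using Fw_sub by (simp add: Int_absorb1)
  show "compact_space (subtopology chabauty (Fw w))"
    by (rule compact_space_subtopology[OF closedin_compact_space[OF compact_chabauty Fw_closed]])
  show "Hausdorff_space (subtopology chabauty (Fw w))"
    by (rule Hausdorff_space_subtopology[OF Hausdorff_chabauty])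
  show "cyc w \<in> topspace (subtopology chabauty (Fw w))" using ts cyc_in[OF w] by simp
  show "countable (topspace (subtopology chabauty (Fw w)))" using ts countable_Fw[OF w] by simp
  show "infinite (topspace (subtopology chabauty (Fw w)))" using ts infinite_Fw[OF w] by simp
  fix x assume "x \<in> topspace (subtopology chabauty (Fw w))" "x \<noteq> cyc w"
  then have x: "x \<in> Fw w" "x \<noteq> cyc w" using ts by auto
  have "openin chabauty {x}" by (rule Fw_isolated[OF w x])
  then show "openin (subtopology chabauty (Fw w)) {x}"
    using x(1) by (intro subset_openin_subtopology) auto
qed



theorem corollary2:
  shows "(chabauty :: (int \<times> int \<Rightarrow> bool) topology) homeomorphic_space
           prod_topology (euclidean :: enat topology) (euclidean :: enat topology)"
proof -
  define e where "e = from_nat_into Wset"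
  have cW: "countable Wset" by (rule countable_subset[OF subset_UNIV]) simp
  have iW: "infinite Wset"
  proof
    assume fin: "finite Wset"
    have sub: "(\<lambda>k::nat. (- int k - 1, 0::int)) ` UNIV \<subseteq> Wset"
      by (auto simp: Wset_def prec_def nrm_def zero_prod_def)
    have "inj (\<lambda>k::nat. (- int k - 1, 0::int))" by (auto intro: injI)
    then have "infinite ((\<lambda>k::nat. (- int k - 1, 0::int)) ` UNIV)"
      using finite_imageD infinite_UNIV_nat by blast
    then show False using fin sub finite_subset by blast
  qed
  have bij: "bij_betw e UNIV Wset" unfolding e_def by (rule bij_betw_from_nat_into[OF cW iW])
  have eW: "e n \<in> Wset" for n using bij bij_betwE by blast
  have einj: "inj e" using bij bij_betw_def by blast
  have "(chabauty :: (int \<times> int \<Rightarrow> bool) topology) homeomorphic_space (euclidean :: (enat \<times> enat) topology)"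
  proof (rule assemble[where p = zsg and q = "(\<infinity>, \<infinity>)" and Xs = "\<lambda>n. Fw (e n)" and Ys = Ypc])
    show "compact_space (chabauty :: (int \<times> int \<Rightarrow> bool) topology)" by (rule compact_chabauty)
    show "Hausdorff_space (euclidean :: (enat \<times> enat) topology)" by (rule Hausdorff_euclidean_t2)
    show "zsg \<in> topspace chabauty" by (rule zsg_top)
    show "(\<infinity>, \<infinity>) \<in> topspace (euclidean :: (enat \<times> enat) topology)" by simp
    show "openin chabauty (Fw (e n))" for n by (rule Fw_open)
    show "closedin chabauty (Fw (e n))" for n by (rule Fw_closed)
    show "Fw (e m) \<inter> Fw (e n) = {}" if "m \<noteq> n" for m n
    proof -
      have "e m \<noteq> e n" using that einj by (simp add: inj_eq)
      then show ?thesis using Fw_disj eW by blast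
    qed
    show "(\<Union>n. Fw (e n)) = topspace chabauty - {zsg}"
    proof (intro equalityI subsetI)
      fix f assume "f \<in> (\<Union>n. Fw (e n))"
      then obtain n where n: "f \<in> Fw (e n)" by blast
      then have "f \<noteq> zsg" using zsg_notin[OF eW[of n]] by blast
      then show "f \<in> topspace chabauty - {zsg}" using n Fw_sub by blast
    next
      fix f assume "f \<in> topspace chabauty - {zsg}"
      then obtain w where w: "w \<in> Wset" "f \<in> Fw w" using exists_Fw by blast
      then obtain n where "w = e n" using bij unfolding bij_betw_def by blast
      then show "f \<in> (\<Union>n. Fw (e n))" using w by blast
    qed
    show "Ypc m \<inter> Ypc n = {}" if "m \<noteq> n" for m n using that by (rule Ypc_disj)
    show "(\<Union>n. Ypc n) = topspace (euclidean :: (enat \<times> enat) topology) - {(\<infinity>, \<infinity>)}"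
      using Ypc_Un by simp
    show "\<exists>N. \<forall>n\<ge>N. Ypc n \<subseteq> V" if "openin euclidean V" "(\<infinity>, \<infinity>) \<in> V" for V
      using Ypc_cof that by simp
    show "subtopology chabauty (Fw (e n)) homeomorphic_space subtopology euclidean (Ypc n)" for n
    proof -
      have "subtopology chabauty (Fw (e n)) homeomorphic_space (euclidean :: enat topology)"
        by (rule Fw_hom[OF eW])
      moreover have "(euclidean :: enat topology) homeomorphic_space subtopology euclidean (Ypc n)"
        using Ypc_hom homeomorphic_space_sym by blast
      ultimately show ?thesis by (rule homeomorphic_space_trans)
    qed
  qed
  then show ?thesis by simp
qed


end
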